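(* Let $N,K,T$ be positive integers, $\mathcal{N}=\{1,\dots,N\}$, $\mathcal{K}=\{1,\dots,K\}$, $\mathcal{T}=\{1,\dots,T\}$. For each $(n,k,t)\in\mathcal{N}\times\mathcal{K}\times\mathcal{T}$ let $h_n[k,t]$ be a random variable with Gamma distribution of shape $\kappa_n[k,t]>0$ and scale $g_n[k,t]/\kappa_n[k,t]$, where $g_n[k,t]>0$. Let $\delta^2>0$, $\bar p>0$, $\bar\upsilon>0$, let $\bar\tau$ be a positive integer, and let $\varepsilon_\theta$ be a positive integer. A policy $\boldsymbol{\pi}=(\boldsymbol{\mathcal{A}},\boldsymbol{\mathcal{P}})$ consists of $a_n[k,t]\in\{0,1\}$ and $p_n[k,t]\ge 0$ for all $(n,k,t)$ such that $\sum_{n\in\mathcal{N}}a_n[k,t]\le 1$ for all $k,t$ and $\sum_{n\in\mathcal{N}}\sum_{k\in\mathcal{K}}p_n[k,t]\le\bar p$ for all $t$. Put $c_n[k,t]=\log_2\!\big(1+p_n[k,t]h_n[k,t]/\delta^2\big)$, $\upsilon(t',t'')=\sum_{n\in\mathcal{N}}\sum_{k\in\mathcal{K}}\sum_{t=t'}^{t''-1}c_n[k,t]a_n[k,t]$, $\theta(\boldsymbol{\pi})=\max_{n\in\mathcal{N},t\in\mathcal{T}}\sum_{k\in\mathcal{K}}a_n[k,t]$ and $E(\boldsymbol{\pi})=\sum_{n,k,t}a_n[k,t]p_n[k,t]$. A sampling sequence is $\mathbf{t}=(t_1,\dots,t_I)$ (with $I$ a free positive integer) together with $t_0=1$ and $t_{I+1}=T+1$,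 such that $t_0<t_1<\dots<t_I\le T$ and $1\le t_{i+1}-t_i\le\bar\tau$ for all $i\in\mathcal{I}=\{0,1,\dots,I\}$; let $\Upsilon$ be the set of such sequences. Consider $$\mathscr{P}3:\ \min_{\boldsymbol{\mathcal{A}},\boldsymbol{\mathcal{P}},\mathbf{t}}\ E(\boldsymbol{\pi})\ \text{ s.t. }\ \mathbb{E}\{\upsilon(t_i,t_{i+1})\}\ge\bar\upsilon\ \forall i\in\mathcal{I},\ \ \theta(\boldsymbol{\pi})\le\varepsilon_\theta,\ \ \boldsymbol{\pi}\text{ a policy},\ \mathbf{t}\in\Upsilon,$$ where the expectation is over the channels $h_n[k,t]$. For integers $1\le t'<t''\le T+1$ let $\mathcal{T}(t',t'')=\{t',\dots,t''-1\}$ and let $E^*(t',t'')$ be the optimal value (equal to $+\infty$ if infeasible) of the inner problem $$\mathscr{P}\text{3-2}:\ \min\ \sum_{n\in\mathcal{N},k\in\mathcal{K},t\in\mathcal{T}(t',t'')}a_n[k,t]p_n[k,t]$$ over $a_n[k,t]\in\{0,1\}$, $p_n[k,t]\ge0$ for $t\in\mathcal{T}(t',t'')$, subject to $\mathbb{E}\{\upsilon(t',t'')\}\ge\bar\upsilon$, $\sum_{k}a_n[k,t]\le\varepsilon_\theta$ for all $n$ and $t\in\mathcal{T}(t',t'')$, $\sum_n a_n[k,t]\le 1$ for all $k$ and $t\in\mathcal{T}(t',t'')$, and $\sum_{n,k}p_n[k,t]\le\bar p$ for all $t\in\mathcal{T}(t',t'')$. Then $\mathscr{P}3$ is equivalent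 to the outer problem $$\mathscr{P}\text{3-1}:\ \min_{\mathbf{t}\in\Upsilon}\ \sum_{i\in\mathcal{I}}E^*(t_i,t_{i+1}),$$ i.e., the optimal values coincide, and an optimal solution of $\mathscr{P}3$ is obtained from an optimal $\mathbf{t}$ of $\mathscr{P}\text{3-1}$ together with optimal solutions of $\mathscr{P}\text{3-2}$ on each interval $\mathcal{T}(t_i,t_{i+1})$.
   Context: This models a UAV sending status updates to $N$ base stations over $K$ resource blocks and $T$ slots; $a_n[k,t]$ indicates that resource block $k$ in slot $t$ is used for the link to base station $n$, $p_n[k,t]$ is the transmit power. *)

theory Defs
  imports "HOL-Probability.Probability"
begin

text \<open>Policies are functions
  a p :: nat \<Rightarrow> nat \<Rightarrow> nat \<Rightarrow> real (arguments n k t); only their values on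
  the index set matter.\<close>

definition gamma_density :: "real \<Rightarrow> real \<Rightarrow> real \<Rightarrow> real" where
  "gamma_density alpha beta x =
     (if 0 < x then x powr (alpha - 1) * exp (- x / beta) / (Gamma alpha * beta powr alpha) else 0)"

definition gamma_distr :: "real \<Rightarrow> real \<Rightarrow> real measure" where
  "gamma_distr alpha beta = density lborel (\<lambda>x. ennreal (gamma_density alpha beta x))"

definition exp_rate ::
  "(nat \<Rightarrow> nat \<Rightarrow> nat \<Rightarrow> real) \<Rightarrow> (nat \<Rightarrow> nat \<Rightarrow> nat \<Rightarrow> real) \<Rightarrow> real
   \<Rightarrow> nat \<Rightarrow> nat \<Rightarrow> nat \<Rightarrow> real \<Rightarrow> real" where
  "exp_rate kappa g delta2 n k t pw =
     integral\<^sup>L (gamma_distr (kappa n k t) (g n k t / kappa n k t))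
       (\<lambda>h. log 2 (1 + pw * h / delta2))"

text \<open>E{ upsilon(t', t'') } (a is deterministic, so by linearity of expectation).\<close>
definition exp_ups ::
  "nat \<Rightarrow> nat \<Rightarrow> (nat \<Rightarrow> nat \<Rightarrow> nat \<Rightarrow> real) \<Rightarrow> (nat \<Rightarrow> nat \<Rightarrow> nat \<Rightarrow> real) \<Rightarrow> real
   \<Rightarrow> (nat \<Rightarrow> nat \<Rightarrow> nat \<Rightarrow> real) \<Rightarrow> (nat \<Rightarrow> nat \<Rightarrow> nat \<Rightarrow> real) \<Rightarrow> nat \<Rightarrow> nat \<Rightarrow> real" where
  "exp_ups N K kappa g delta2 a p t1 t2 =
     (\<Sum>n\<in>{1..N}. \<Sum>k\<in>{1..K}. \<Sum>t\<in>{t1..<t2}.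
        exp_rate kappa g delta2 n k t (p n k t) * a n k t)"

definition is_policy ::
  "nat \<Rightarrow> nat \<Rightarrow> nat \<Rightarrow> real \<Rightarrow> (nat \<Rightarrow> nat \<Rightarrow> nat \<Rightarrow> real) \<Rightarrow> (nat \<Rightarrow> nat \<Rightarrow> nat \<Rightarrow> real) \<Rightarrow> bool" where
  "is_policy N K T pbar a p \<longleftrightarrow>
     (\<forall>n\<in>{1..N}. \<forall>k\<in>{1..K}. \<forall>t\<in>{1..T}. a n k t \<in> {0, 1} \<and> 0 \<le> p n k t) \<and>
     (\<forall>k\<in>{1..K}. \<forall>t\<in>{1..T}. (\<Sum>n\<in>{1..N}. a n k t) \<le> 1) \<and>
     (\<forall>t\<in>{1..T}. (\<Sum>n\<in>{1..N}. \<Sum>k\<in>{1..K}. p n k t) \<le> pbar)"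

definition theta :: "nat \<Rightarrow> nat \<Rightarrow> nat \<Rightarrow> (nat \<Rightarrow> nat \<Rightarrow> nat \<Rightarrow> real) \<Rightarrow> real" where
  "theta N K T a = Max {(\<Sum>k\<in>{1..K}. a n k t) | n t. n \<in> {1..N} \<and> t \<in> {1..T}}"

definition energy ::
  "nat \<Rightarrow> nat \<Rightarrow> nat set \<Rightarrow> (nat \<Rightarrow> nat \<Rightarrow> nat \<Rightarrow> real) \<Rightarrow> (nat \<Rightarrow> nat \<Rightarrow> nat \<Rightarrow> real) \<Rightarrow> real" where
  "energy N K Ts a p = (\<Sum>n\<in>{1..N}. \<Sum>k\<in>{1..K}. \<Sum>t\<in>Ts. a n k t * p n k t)"

definition full_seq :: "nat \<Rightarrow> nat list \<Rightarrow> nat list" where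
  "full_seq T ts = 1 # ts @ [T + 1]"

definition samp_seq :: "nat \<Rightarrow> nat \<Rightarrow> nat list \<Rightarrow> bool" where
  "samp_seq T taubar ts \<longleftrightarrow>
     1 \<le> length ts \<and>
     (let s = full_seq T ts in
        sorted_wrt (<) (1 # ts) \<and> last ts \<le> T \<and>
        (\<forall>i\<le>length ts. 1 \<le> s ! (Suc i) - s ! i \<and> s ! (Suc i) - s ! i \<le> taubar))"

definition feasible_P3 where
  "feasible_P3 N K T kappa g delta2 pbar upsbar taubar eps a p ts \<longleftrightarrow>
     is_policy N K T pbar a p \<and> samp_seq T taubar ts \<and>
     theta N K T a \<le> real eps \<and>
     (\<forall>i\<le>length ts. exp_ups N K kappa g delta2 a p (full_seq T ts ! i) (full_seq T ts ! Suc i) \<ge> upsbar)"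

definition opt_P3 :: "nat \<Rightarrow> nat \<Rightarrow> nat \<Rightarrow> (nat \<Rightarrow> nat \<Rightarrow> nat \<Rightarrow> real) \<Rightarrow> (nat \<Rightarrow> nat \<Rightarrow> nat \<Rightarrow> real)
   \<Rightarrow> real \<Rightarrow> real \<Rightarrow> real \<Rightarrow> nat \<Rightarrow> nat \<Rightarrow> ereal" where
  "opt_P3 N K T kappa g delta2 pbar upsbar taubar eps =
     Inf {ereal (energy N K {1..T} a p) | a p ts.
            feasible_P3 N K T kappa g delta2 pbar upsbar taubar eps a p ts}"

definition feasible_P32 where
  "feasible_P32 N K kappa g delta2 pbar upsbar eps t1 t2 a p \<longleftrightarrow>
     (\<forall>n\<in>{1..N}. \<forall>k\<in>{1..K}. \<forall>t\<in>{t1..<t2}. a n k t \<in> {0, 1} \<and> 0 \<le> p n k t) \<and>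
     exp_ups N K kappa g delta2 a p t1 t2 \<ge> upsbar \<and>
     (\<forall>n\<in>{1..N}. \<forall>t\<in>{t1..<t2}. (\<Sum>k\<in>{1..K}. a n k t) \<le> real eps) \<and>
     (\<forall>k\<in>{1..K}. \<forall>t\<in>{t1..<t2}. (\<Sum>n\<in>{1..N}. a n k t) \<le> 1) \<and>
     (\<forall>t\<in>{t1..<t2}. (\<Sum>n\<in>{1..N}. \<Sum>k\<in>{1..K}. p n k t) \<le> pbar)"

text \<open>E^*(t1,t2): optimal value of P3-2 (+\<infinity> if infeasible, as Inf {} = \<infinity>).\<close>
definition Estar :: "nat \<Rightarrow> nat \<Rightarrow> (nat \<Rightarrow> nat \<Rightarrow> nat \<Rightarrow> real) \<Rightarrow> (nat \<Rightarrow> nat \<Rightarrow> nat \<Rightarrow> real)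
   \<Rightarrow> real \<Rightarrow> real \<Rightarrow> real \<Rightarrow> nat \<Rightarrow> nat \<Rightarrow> nat \<Rightarrow> ereal" where
  "Estar N K kappa g delta2 pbar upsbar eps t1 t2 =
     Inf {ereal (energy N K {t1..<t2} a p) | a p.
            feasible_P32 N K kappa g delta2 pbar upsbar eps t1 t2 a p}"

definition obj_P31 where
  "obj_P31 N K T kappa g delta2 pbar upsbar eps ts =
     (\<Sum>i\<in>{0..length ts}. Estar N K kappa g delta2 pbar upsbar eps
                              (full_seq T ts ! i) (full_seq T ts ! Suc i))"

definition opt_P31 :: "nat \<Rightarrow> nat \<Rightarrow> nat \<Rightarrow> (nat \<Rightarrow> nat \<Rightarrow> nat \<Rightarrow> real) \<Rightarrow> (nat \<Rightarrow> nat \<Rightarrow> nat \<Rightarrow> real)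
   \<Rightarrow> real \<Rightarrow> real \<Rightarrow> real \<Rightarrow> nat \<Rightarrow> nat \<Rightarrow> ereal" where
  "opt_P31 N K T kappa g delta2 pbar upsbar taubar eps =
     Inf {obj_P31 N K T kappa g delta2 pbar upsbar eps ts | ts. samp_seq T taubar ts}"

end

theory Submission
  imports Defs
begin


lemma mono_chain:
  assumes "\<forall>i<m. (g::nat\<Rightarrow>nat) i \<le> g (Suc i)" "i \<le> j" "j \<le> m"
  shows "g i \<le> g j"
  using assms(2,3)
proof (induction j)
  case 0 then show ?case by simp
next
  case (Suc j)
  show ?case
  proof (cases "i = Suc j")
    case True then show ?thesis by simp
  next
    case False
    then have "i \<le> j" using Suc.prems by simp
    then have "g i \<le> g j" using Suc by simp
    also have "g j \<le> g (Suc j)" using assms(1) Suc.prems by simp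
    finally show ?thesis .
  qed
qed

lemma sum_split:
  assumes "\<forall>i<m. (g::nat\<Rightarrow>nat) i \<le> g (Suc i)"
  shows "sum f {g 0..<g m} = (\<Sum>i<m. sum f {g i..<g (Suc i)})"
  using assms
proof (induction m)
  case 0 show ?case by simp
next
  case (Suc m)
  have h1: "g 0 \<le> g m" using mono_chain[of "Suc m" g 0 m] Suc.prems by simp
  have h2: "g m \<le> g (Suc m)" using Suc.prems by simp
  have IH: "sum f {g 0..<g m} = (\<Sum>i<m. sum f {g i..<g (Suc i)})" using Suc by simp
  show ?case using sum.atLeastLessThan_concat[OF h1 h2, of f] IH by simp
qed

lemma find_ivl:
  assumes "\<forall>i<m. (g::nat\<Rightarrow>nat) i \<le> g (Suc i)" "g 0 \<le> t" "t < g m"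
  shows "\<exists>i<m. g i \<le> t \<and> t < g (Suc i)"
  using assms
proof (induction m)
  case 0 then show ?case by simp
next
  case (Suc m)
  show ?case
  proof (cases "t < g m")
    case True
    then obtain i where "i < m" "g i \<le> t \<and> t < g (Suc i)" using Suc by auto
    then show ?thesis by (intro exI[of _ i]) simp
  next
    case False
    then show ?thesis using Suc.prems by (intro exI[of _ m]) simp
  qed
qed

lemma samp_facts:
  assumes "samp_seq T taubar ts"
  shows "full_seq T ts ! 0 = 1" "full_seq T ts ! Suc (length ts) = T + 1"
    "\<forall>i\<le>length ts. full_seq T ts ! i < full_seq T ts ! Suc i"
proof -
  show "full_seq T ts ! 0 = 1" by (simp add: full_seq_def)
  show "full_seq T ts ! Suc (length ts) = T + 1" by (simp add: full_seq_def nth_append)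
  show "\<forall>i\<le>length ts. full_seq T ts ! i < full_seq T ts ! Suc i"
  proof (intro allI impI)
    fix i assume i: "i \<le> length ts"
    have "\<forall>i\<le>length ts. 1 \<le> full_seq T ts ! Suc i - full_seq T ts ! i"
      using assms unfolding samp_seq_def Let_def by blast
    then have "1 \<le> full_seq T ts ! Suc i - full_seq T ts ! i" using i by blast
    then show "full_seq T ts ! i < full_seq T ts ! Suc i" by simp
  qed
qed

lemma samp_mono:
  assumes "samp_seq T taubar ts"
  shows "\<forall>i<Suc (length ts). full_seq T ts ! i \<le> full_seq T ts ! Suc i"
  using samp_facts(3)[OF assms] by (simp add: less_Suc_eq_le less_imp_le)

lemma samp_sum:
  assumes "samp_seq T taubar ts"
  shows "sum f {1..T} = (\<Sum>i\<in>{0..length ts}. sum f {full_seq T ts ! i..<full_seq T ts ! Suc i})"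
proof -
  have "sum f {1..T} = sum f {full_seq T ts ! 0..<full_seq T ts ! Suc (length ts)}"
    using samp_facts[OF assms] by (simp add: atLeastLessThanSuc_atLeastAtMost)
  also have "\<dots> = (\<Sum>i<Suc (length ts). sum f {full_seq T ts ! i..<full_seq T ts ! Suc i})"
    by (rule sum_split[OF samp_mono[OF assms]])
  also have "{..<Suc (length ts)} = {0..length ts}" by auto
  finally show ?thesis .
qed

lemma samp_sub:
  assumes "samp_seq T taubar ts" "i \<le> length ts" "t \<in> {full_seq T ts ! i..<full_seq T ts ! Suc i}"
  shows "t \<in> {1..T}"
proof -
  have "full_seq T ts ! 0 \<le> full_seq T ts ! i"
    using mono_chain[OF samp_mono[OF assms(1)], of 0 i] assms(2) by simp
  moreover have "full_seq T ts ! Suc i \<le> full_seq T ts ! Suc (length ts)"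
    using mono_chain[OF samp_mono[OF assms(1)], of "Suc i" "Suc (length ts)"] assms(2) by simp
  ultimately show ?thesis using assms(3) samp_facts[OF assms(1)] by auto
qed

lemma samp_find:
  assumes "samp_seq T taubar ts" "t \<in> {1..T}"
  shows "\<exists>i\<le>length ts. t \<in> {full_seq T ts ! i..<full_seq T ts ! Suc i}"
proof -
  obtain i where "i < Suc (length ts)" "full_seq T ts ! i \<le> t \<and> t < full_seq T ts ! Suc i"
    using find_ivl[OF samp_mono[OF assms(1)], of t] assms(2) samp_facts[OF assms(1)] by auto
  then show ?thesis by (intro exI[of _ i]) (simp add: less_Suc_eq_le)
qed

lemma samp_idx:
  assumes "samp_seq T taubar ts" "i \<le> length ts" "t \<in> {full_seq T ts ! i..<full_seq T ts ! Suc i}"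
  shows "(LEAST j. t < full_seq T ts ! Suc j) = i"
proof (rule Least_equality)
  show "t < full_seq T ts ! Suc i" using assms(3) by simp
next
  fix j assume "t < full_seq T ts ! Suc j"
  show "i \<le> j"
  proof (rule ccontr)
    assume "\<not> i \<le> j"
    then have "full_seq T ts ! Suc j \<le> full_seq T ts ! i"
      using mono_chain[OF samp_mono[OF assms(1)], of "Suc j" i] assms(2) by simp
    then show False using assms(3) \<open>t < full_seq T ts ! Suc j\<close> by simp
  qed
qed

lemma theta_le:
  assumes "0 < N" "0 < T"
  shows "theta N K T a \<le> r \<longleftrightarrow> (\<forall>n\<in>{1..N}. \<forall>t\<in>{1..T}. (\<Sum>k\<in>{1..K}. a n k t) \<le> r)"
proof -
  have eq: "{(\<Sum>k\<in>{1..K}. a n k t) | n t. n \<in> {1..N} \<and> t \<in> {1..T}}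
     = (\<lambda>(n,t). (\<Sum>k\<in>{1..K}. a n k t)) ` ({1..N} \<times> {1..T})" by force
  have "finite ((\<lambda>(n,t). (\<Sum>k\<in>{1..K}. a n k t)) ` ({1..N} \<times> {1..T}))" by simp
  moreover have "(\<lambda>(n,t). (\<Sum>k\<in>{1..K}. a n k t)) ` ({1..N} \<times> {1..T}) \<noteq> {}" using assms by auto
  ultimately show ?thesis unfolding theta_def eq by (subst Max_le_iff) auto
qed

lemma P32_cong:
  assumes "\<And>n k t. t \<in> {t1..<t2} \<Longrightarrow> a n k t = a' n k t \<and> p n k t = p' n k t"
  shows "feasible_P32 N K kappa g delta2 pbar upsbar eps t1 t2 a p
           = feasible_P32 N K kappa g delta2 pbar upsbar eps t1 t2 a' p'"
    "energy N K {t1..<t2} a p = energy N K {t1..<t2} a' p'"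
proof -
  have u: "exp_ups N K kappa g delta2 a p t1 t2 = exp_ups N K kappa g delta2 a' p' t1 t2"
    unfolding exp_ups_def by (intro sum.cong refl) (simp add: assms)
  have s1: "\<And>n t. t \<in> {t1..<t2} \<Longrightarrow> (\<Sum>k\<in>{1..K}. a n k t) = (\<Sum>k\<in>{1..K}. a' n k t)"
    by (intro sum.cong refl) (simp add: assms)
  have s2: "\<And>k t. t \<in> {t1..<t2} \<Longrightarrow> (\<Sum>n\<in>{1..N}. a n k t) = (\<Sum>n\<in>{1..N}. a' n k t)"
    by (intro sum.cong refl) (simp add: assms)
  have s3: "\<And>t. t \<in> {t1..<t2} \<Longrightarrow> (\<Sum>n\<in>{1..N}. \<Sum>k\<in>{1..K}. p n k t) = (\<Sum>n\<in>{1..N}. \<Sum>k\<in>{1..K}. p' n k t)"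
    by (intro sum.cong refl) (simp add: assms)
  show "feasible_P32 N K kappa g delta2 pbar upsbar eps t1 t2 a p
           = feasible_P32 N K kappa g delta2 pbar upsbar eps t1 t2 a' p'"
    unfolding feasible_P32_def u by (intro conj_cong ball_cong refl) (simp_all add: assms s1 s2 s3)
  show "energy N K {t1..<t2} a p = energy N K {t1..<t2} a' p'"
    unfolding energy_def by (intro sum.cong refl) (simp add: assms)
qed

lemma P32_energy_nonneg:
  assumes "feasible_P32 N K kappa g delta2 pbar upsbar eps t1 t2 a p"
  shows "0 \<le> energy N K {t1..<t2} a p"
proof -
  have h: "\<And>n k t. n \<in> {1..N} \<Longrightarrow> k \<in> {1..K} \<Longrightarrow> t \<in> {t1..<t2} \<Longrightarrow> 0 \<le> a n k t * p n k t"
  proof -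
    fix n k t assume "n \<in> {1..N}" "k \<in> {1..K}" "t \<in> {t1..<t2}"
    then have "a n k t \<in> {0, 1}" "0 \<le> p n k t" using assms unfolding feasible_P32_def by blast+
    then show "0 \<le> a n k t * p n k t" by auto
  qed
  show ?thesis unfolding energy_def by (intro sum_nonneg) (simp add: h)
qed

lemma Estar_nonneg: "0 \<le> Estar N K kappa g delta2 pbar upsbar eps t1 t2"
  unfolding Estar_def by (rule Inf_greatest) (auto dest: P32_energy_nonneg)

lemma restrict_P3:
  assumes "0 < N" "0 < T" "feasible_P3 N K T kappa g delta2 pbar upsbar taubar eps a p ts" "i \<le> length ts"
  shows "feasible_P32 N K kappa g delta2 pbar upsbar eps (full_seq T ts ! i) (full_seq T ts ! Suc i) a p"
proof -
  have ss: "samp_seq T taubar ts" and pol: "is_policy N K T pbar a p"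
    and th: "theta N K T a \<le> real eps"
    and up: "exp_ups N K kappa g delta2 a p (full_seq T ts ! i) (full_seq T ts ! Suc i) \<ge> upsbar"
    using assms(3,4) unfolding feasible_P3_def by auto
  have sub: "\<And>t. t \<in> {full_seq T ts ! i..<full_seq T ts ! Suc i} \<Longrightarrow> t \<in> {1..T}"
    using samp_sub[OF ss assms(4)] by blast
  have th2: "\<forall>n\<in>{1..N}. \<forall>t\<in>{1..T}. (\<Sum>k\<in>{1..K}. a n k t) \<le> real eps"
    using th theta_le[OF assms(1,2)] by blast
  show ?thesis unfolding feasible_P32_def
  proof (intro conjI ballI)
    fix n k t assume "n \<in> {1..N}" "k \<in> {1..K}" "t \<in> {full_seq T ts ! i..<full_seq T ts ! Suc i}"
    then show "a n k t \<in> {0, 1}" using pol sub unfolding is_policy_def by blast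
  next
    fix n k t assume "n \<in> {1..N}" "k \<in> {1..K}" "t \<in> {full_seq T ts ! i..<full_seq T ts ! Suc i}"
    then show "0 \<le> p n k t" using pol sub unfolding is_policy_def by blast
  next
    show "upsbar \<le> exp_ups N K kappa g delta2 a p (full_seq T ts ! i) (full_seq T ts ! Suc i)" by (rule up)
  next
    fix n t assume "n \<in> {1..N}" "t \<in> {full_seq T ts ! i..<full_seq T ts ! Suc i}"
    then show "(\<Sum>k\<in>{1..K}. a n k t) \<le> real eps" using th2 sub by blast
  next
    fix k t assume "k \<in> {1..K}" "t \<in> {full_seq T ts ! i..<full_seq T ts ! Suc i}"
    then show "(\<Sum>n\<in>{1..N}. a n k t) \<le> 1" using pol sub unfolding is_policy_def by blast
  next
    fix t assume "t \<in> {full_seq T ts ! i..<full_seq T ts ! Suc i}"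
    then show "(\<Sum>n\<in>{1..N}. \<Sum>k\<in>{1..K}. p n k t) \<le> pbar" using pol sub unfolding is_policy_def by blast
  qed
qed

lemma glue_P3:
  assumes "0 < N" "0 < T" "samp_seq T taubar ts"
    "\<forall>i\<le>length ts. feasible_P32 N K kappa g delta2 pbar upsbar eps (full_seq T ts ! i) (full_seq T ts ! Suc i) a p"
  shows "feasible_P3 N K T kappa g delta2 pbar upsbar taubar eps a p ts"
proof -
  have F: "\<And>t. t \<in> {1..T} \<Longrightarrow> \<exists>i\<le>length ts. feasible_P32 N K kappa g delta2 pbar upsbar eps (full_seq T ts ! i) (full_seq T ts ! Suc i) a p \<and> t \<in> {full_seq T ts ! i..<full_seq T ts ! Suc i}"
    using samp_find[OF assms(3)] assms(4) by blast
  have pol: "is_policy N K T pbar a p"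
    unfolding is_policy_def
  proof (intro conjI ballI)
    fix n k t assume "n \<in> {1..N}" "k \<in> {1..K}" "t \<in> {1..T}"
    then show "a n k t \<in> {0, 1}" using F[of t] unfolding feasible_P32_def by blast
  next
    fix n k t assume "n \<in> {1..N}" "k \<in> {1..K}" "t \<in> {1..T}"
    then show "0 \<le> p n k t" using F[of t] unfolding feasible_P32_def by blast
  next
    fix k t assume "k \<in> {1..K}" "t \<in> {1..T}"
    then show "(\<Sum>n\<in>{1..N}. a n k t) \<le> 1" using F[of t] unfolding feasible_P32_def by blast
  next
    fix t assume "t \<in> {1..T}"
    then show "(\<Sum>n\<in>{1..N}. \<Sum>k\<in>{1..K}. p n k t) \<le> pbar" using F[of t] unfolding feasible_P32_def by blast
  qed
  have th: "theta N K T a \<le> real eps"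
    unfolding theta_le[OF assms(1,2)]
  proof (intro ballI)
    fix n t assume "n \<in> {1..N}" "t \<in> {1..T}"
    then show "(\<Sum>k\<in>{1..K}. a n k t) \<le> real eps" using F[of t] unfolding feasible_P32_def by blast
  qed
  show ?thesis unfolding feasible_P3_def using pol th assms(3,4) unfolding feasible_P32_def by blast
qed

lemma swap3:
  "(\<Sum>n\<in>A. \<Sum>k\<in>B. \<Sum>t\<in>C. f n k t) = (\<Sum>t\<in>C. \<Sum>n\<in>A. \<Sum>k\<in>B. f n k t)"
proof -
  have "(\<Sum>n\<in>A. \<Sum>k\<in>B. \<Sum>t\<in>C. f n k t) = (\<Sum>n\<in>A. \<Sum>t\<in>C. \<Sum>k\<in>B. f n k t)"
    by (intro sum.cong refl) (rule sum.swap)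
  also have "\<dots> = (\<Sum>t\<in>C. \<Sum>n\<in>A. \<Sum>k\<in>B. f n k t)" by (rule sum.swap)
  finally show ?thesis .
qed

lemma energy_split:
  assumes "samp_seq T taubar ts"
  shows "ereal (energy N K {1..T} a p) = (\<Sum>i\<in>{0..length ts}. ereal (energy N K {full_seq T ts ! i..<full_seq T ts ! Suc i} a p))"
proof -
  have "energy N K {1..T} a p = (\<Sum>t\<in>{1..T}. \<Sum>n\<in>{1..N}. \<Sum>k\<in>{1..K}. a n k t * p n k t)"
    unfolding energy_def by (rule swap3)
  also have "\<dots> = (\<Sum>i\<in>{0..length ts}. \<Sum>t\<in>{full_seq T ts ! i..<full_seq T ts ! Suc i}. \<Sum>n\<in>{1..N}. \<Sum>k\<in>{1..K}. a n k t * p n k t)"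
    by (rule samp_sum[OF assms])
  also have "\<dots> = (\<Sum>i\<in>{0..length ts}. energy N K {full_seq T ts ! i..<full_seq T ts ! Suc i} a p)"
    unfolding energy_def by (rule sum.cong[OF refl]) (rule swap3[where f="\<lambda>n k t. a n k t * p n k t" and A="{1..N}" and B="{1..K}", symmetric])
  finally show ?thesis by (simp add: sum_ereal)
qed

theorem theorem1:
  fixes N K T taubar eps :: nat
    and kappa g :: "nat \<Rightarrow> nat \<Rightarrow> nat \<Rightarrow> real"
    and delta2 pbar upsbar :: real
  assumes "0 < N" "0 < K" "0 < T"
    and "\<forall>n\<in>{1..N}. \<forall>k\<in>{1..K}. \<forall>t\<in>{1..T}. 0 < kappa n k t \<and> 0 < g n k t"
    and "0 < delta2" "0 < pbar" "0 < upsbar" "0 < taubar" "0 < eps"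
  shows "opt_P3 N K T kappa g delta2 pbar upsbar taubar eps
           = opt_P31 N K T kappa g delta2 pbar upsbar taubar eps \<and>
         (\<forall>ts a p.
           samp_seq T taubar ts \<and>
           obj_P31 N K T kappa g delta2 pbar upsbar eps ts
             = opt_P31 N K T kappa g delta2 pbar upsbar taubar eps \<and>
           (\<forall>i\<le>length ts.
              feasible_P32 N K kappa g delta2 pbar upsbar eps
                (full_seq T ts ! i) (full_seq T ts ! Suc i) a p \<and>
              ereal (energy N K {full_seq T ts ! i..<full_seq T ts ! Suc i} a p)
                = Estar N K kappa g delta2 pbar upsbar eps
                    (full_seq T ts ! i) (full_seq T ts ! Suc i))
           \<longrightarrow> feasible_P3 N K T kappa g delta2 pbar upsbar taubar eps a p ts \<and>
               ereal (energy N K {1..T} a p)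
                 = opt_P3 N K T kappa g delta2 pbar upsbar taubar eps)"
proof -
  let ?E = "\<lambda>ts i. Estar N K kappa g delta2 pbar upsbar eps (full_seq T ts ! i) (full_seq T ts ! Suc i)"
  let ?en = "\<lambda>ts i a p. energy N K {full_seq T ts ! i..<full_seq T ts ! Suc i} a p"
  have geq: "opt_P31 N K T kappa g delta2 pbar upsbar taubar eps \<le> opt_P3 N K T kappa g delta2 pbar upsbar taubar eps"
    unfolding opt_P3_def
  proof (rule Inf_greatest)
    fix x assume "x \<in> {ereal (energy N K {1..T} a p) | a p ts.
            feasible_P3 N K T kappa g delta2 pbar upsbar taubar eps a p ts}"
    then obtain a p ts where x: "x = ereal (energy N K {1..T} a p)"
      and f: "feasible_P3 N K T kappa g delta2 pbar upsbar taubar eps a p ts" by blast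
    have ss: "samp_seq T taubar ts" using f unfolding feasible_P3_def by blast
    have "opt_P31 N K T kappa g delta2 pbar upsbar taubar eps \<le> obj_P31 N K T kappa g delta2 pbar upsbar eps ts"
      unfolding opt_P31_def by (rule Inf_lower) (use ss in blast)
    also have "obj_P31 N K T kappa g delta2 pbar upsbar eps ts = (\<Sum>i\<in>{0..length ts}. ?E ts i)"
      by (simp add: obj_P31_def)
    also have "\<dots> \<le> (\<Sum>i\<in>{0..length ts}. ereal (?en ts i a p))"
    proof (rule sum_mono)
      fix i assume "i \<in> {0..length ts}"
      then have "feasible_P32 N K kappa g delta2 pbar upsbar eps (full_seq T ts ! i) (full_seq T ts ! Suc i) a p"
        using restrict_P3[OF assms(1,3) f] by simp
      then show "?E ts i \<le> ereal (?en ts i a p)" unfolding Estar_def by (intro Inf_lower) blast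
    qed
    also have "\<dots> = x" using energy_split[OF ss] x by simp
    finally show "opt_P31 N K T kappa g delta2 pbar upsbar taubar eps \<le> x" .
  qed
  have leq: "opt_P3 N K T kappa g delta2 pbar upsbar taubar eps \<le> opt_P31 N K T kappa g delta2 pbar upsbar taubar eps"
    unfolding opt_P31_def
  proof (rule Inf_greatest)
    fix x assume "x \<in> {obj_P31 N K T kappa g delta2 pbar upsbar eps ts | ts. samp_seq T taubar ts}"
    then obtain ts where x: "x = obj_P31 N K T kappa g delta2 pbar upsbar eps ts"
      and ss: "samp_seq T taubar ts" by blast
    have xs: "x = (\<Sum>i\<in>{0..length ts}. ?E ts i)" using x by (simp add: obj_P31_def)
    define I where "I = length ts"
    define s where "s = full_seq T ts"
    show "opt_P3 N K T kappa g delta2 pbar upsbar taubar eps \<le> x"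
    proof (cases "\<exists>i\<le>I. ?E ts i = \<infinity>")
      case True
      then have "x = \<infinity>" unfolding xs sum_Pinfty I_def by auto
      then show ?thesis by simp
    next
      case False
      define r where "r i = real_of_ereal (?E ts i)" for i
      have fin: "?E ts i = ereal (r i)" if i: "i \<le> I" for i
      proof -
        have "0 \<le> ?E ts i" by (rule Estar_nonneg)
        then have "\<bar>?E ts i\<bar> \<noteq> \<infinity>" using False i abs_ereal_ge0 by metis
        then show ?thesis unfolding r_def using ereal_real' by metis
      qed
      have xr: "x = ereal (\<Sum>i\<in>{0..I}. r i)"
      proof -
        have "x = (\<Sum>i\<in>{0..I}. ?E ts i)" unfolding xs I_def ..
        also have "\<dots> = (\<Sum>i\<in>{0..I}. ereal (r i))"
        proof (rule sum.cong[OF refl])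
          fix i assume "i \<in> {0..I}"
          then have "i \<le> I" by simp
          then show "?E ts i = ereal (r i)" by (rule fin)
        qed
        finally have "x = (\<Sum>i\<in>{0..I}. ereal (r i))" .
        then show ?thesis by (simp add: sum_ereal)
      qed
      show ?thesis
      proof (rule ereal_le_epsilon2)
        fix e :: real assume e0: "0 < e"
        define e' where "e' = e / real (Suc I)"
        have e': "0 < e'" using e0 unfolding e'_def by simp
        have ex: "\<forall>i. \<exists>ap. i \<le> I \<longrightarrow>
           feasible_P32 N K kappa g delta2 pbar upsbar eps (s!i) (s!Suc i) (fst ap) (snd ap) \<and>
           energy N K {s!i..<s!Suc i} (fst ap) (snd ap) < r i + e'"
        proof
          fix i show "\<exists>ap. i \<le> I \<longrightarrow>
           feasible_P32 N K kappa g delta2 pbar upsbar eps (s!i) (s!Suc i) (fst ap) (snd ap) \<and>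
           energy N K {s!i..<s!Suc i} (fst ap) (snd ap) < r i + e'"
          proof (cases "i \<le> I")
            case False then show ?thesis by simp
          next
            case True
            have "?E ts i < ereal (r i + e')" using fin[OF True] e' by simp
            then have "Inf {ereal (energy N K {s!i..<s!Suc i} a p) | a p.
                  feasible_P32 N K kappa g delta2 pbar upsbar eps (s!i) (s!Suc i) a p} < ereal (r i + e')"
              unfolding Estar_def s_def .
            then obtain y where y: "y \<in> {ereal (energy N K {s!i..<s!Suc i} a p) | a p.
                  feasible_P32 N K kappa g delta2 pbar upsbar eps (s!i) (s!Suc i) a p}"
                "y < ereal (r i + e')"
              unfolding Inf_less_iff by blast
            then obtain a p where "feasible_P32 N K kappa g delta2 pbar upsbar eps (s!i) (s!Suc i) a p"
              "ereal (energy N K {s!i..<s!Suc i} a p) < ereal (r i + e')" by blast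
            then show ?thesis by (intro exI[of _ "(a,p)"]) simp
          qed
        qed
        from choice[OF ex] obtain F where F0: "\<forall>i. i \<le> I \<longrightarrow>
           feasible_P32 N K kappa g delta2 pbar upsbar eps (s!i) (s!Suc i) (fst (F i)) (snd (F i)) \<and>
           energy N K {s!i..<s!Suc i} (fst (F i)) (snd (F i)) < r i + e'" by blast
        define idx where "idx t = (LEAST j. t < s ! Suc j)" for t
        define a' where "a' n k t = fst (F (idx t)) n k t" for n k t
        define p' where "p' n k t = snd (F (idx t)) n k t" for n k t
        have cong: "feasible_P32 N K kappa g delta2 pbar upsbar eps (s!i) (s!Suc i) a' p'
              = feasible_P32 N K kappa g delta2 pbar upsbar eps (s!i) (s!Suc i) (fst (F i)) (snd (F i))
            \<and> energy N K {s!i..<s!Suc i} a' p' = energy N K {s!i..<s!Suc i} (fst (F i)) (snd (F i))"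
          if i: "i \<le> I" for i
        proof -
          have "a' n k t = fst (F i) n k t \<and> p' n k t = snd (F i) n k t" if "t \<in> {s!i..<s!Suc i}" for n k t
            using samp_idx[OF ss, of i t] i that unfolding a'_def p'_def idx_def s_def I_def by simp
          from P32_cong[OF this] show ?thesis by simp
        qed
        have allf: "\<forall>i\<le>length ts. feasible_P32 N K kappa g delta2 pbar upsbar eps (full_seq T ts ! i) (full_seq T ts ! Suc i) a' p'"
        proof (intro allI impI)
          fix i assume "i \<le> length ts"
          then have i: "i \<le> I" unfolding I_def .
          have f1: "feasible_P32 N K kappa g delta2 pbar upsbar eps (s!i) (s!Suc i) (fst (F i)) (snd (F i))"
            using F0 i by blast
          have "feasible_P32 N K kappa g delta2 pbar upsbar eps (s!i) (s!Suc i) a' p'"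
            using cong[OF i] f1 by blast
          then show "feasible_P32 N K kappa g delta2 pbar upsbar eps (full_seq T ts ! i) (full_seq T ts ! Suc i) a' p'"
            unfolding s_def .
        qed
        have feas: "feasible_P3 N K T kappa g delta2 pbar upsbar taubar eps a' p' ts"
          by (rule glue_P3[OF assms(1,3) ss allf])
        have "opt_P3 N K T kappa g delta2 pbar upsbar taubar eps \<le> ereal (energy N K {1..T} a' p')"
          unfolding opt_P3_def by (rule Inf_lower) (use feas in blast)
        also have "\<dots> = (\<Sum>i\<in>{0..I}. ereal (energy N K {s!i..<s!Suc i} a' p'))"
          using energy_split[OF ss] unfolding s_def I_def by simp
        also have "\<dots> \<le> (\<Sum>i\<in>{0..I}. ereal (r i + e'))"
        proof (rule sum_mono)
          fix i assume "i \<in> {0..I}"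
          then have "i \<le> I" by simp
          then have e1: "energy N K {s!i..<s!Suc i} (fst (F i)) (snd (F i)) < r i + e'"
            using F0 by blast
          have "energy N K {s!i..<s!Suc i} a' p' = energy N K {s!i..<s!Suc i} (fst (F i)) (snd (F i))"
            using cong[OF \<open>i \<le> I\<close>] by blast
          then show "ereal (energy N K {s!i..<s!Suc i} a' p') \<le> ereal (r i + e')"
            using e1 by simp
        qed
        also have "\<dots> = ereal (\<Sum>i\<in>{0..I}. r i) + ereal e"
        proof -
          have "(\<Sum>i\<in>{0..I}. r i + e') = (\<Sum>i\<in>{0..I}. r i) + real (Suc I) * e'"
            by (simp add: sum.distrib)
          also have "real (Suc I) * e' = e" unfolding e'_def by simp
          finally show ?thesis by (simp add: sum_ereal)
        qed
        also have "\<dots> = x + ereal e" using xr by simp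
        finally show "opt_P3 N K T kappa g delta2 pbar upsbar taubar eps \<le> x + ereal e" .
      qed
    qed
  qed
  have eq: "opt_P3 N K T kappa g delta2 pbar upsbar taubar eps = opt_P31 N K T kappa g delta2 pbar upsbar taubar eps"
    using geq leq by simp
  show ?thesis
  proof (intro conjI)
    show "opt_P3 N K T kappa g delta2 pbar upsbar taubar eps = opt_P31 N K T kappa g delta2 pbar upsbar taubar eps"
      by (rule eq)
    show "\<forall>ts a p.
           samp_seq T taubar ts \<and>
           obj_P31 N K T kappa g delta2 pbar upsbar eps ts
             = opt_P31 N K T kappa g delta2 pbar upsbar taubar eps \<and>
           (\<forall>i\<le>length ts.
              feasible_P32 N K kappa g delta2 pbar upsbar eps
                (full_seq T ts ! i) (full_seq T ts ! Suc i) a p \<and>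
              ereal (energy N K {full_seq T ts ! i..<full_seq T ts ! Suc i} a p)
                = Estar N K kappa g delta2 pbar upsbar eps
                    (full_seq T ts ! i) (full_seq T ts ! Suc i))
           \<longrightarrow> feasible_P3 N K T kappa g delta2 pbar upsbar taubar eps a p ts \<and>
               ereal (energy N K {1..T} a p)
                 = opt_P3 N K T kappa g delta2 pbar upsbar taubar eps"
    proof (intro allI impI)
      fix ts a p
      assume H: "samp_seq T taubar ts \<and>
           obj_P31 N K T kappa g delta2 pbar upsbar eps ts
             = opt_P31 N K T kappa g delta2 pbar upsbar taubar eps \<and>
           (\<forall>i\<le>length ts.
              feasible_P32 N K kappa g delta2 pbar upsbar eps
                (full_seq T ts ! i) (full_seq T ts ! Suc i) a p \<and>
              ereal (energy N K {full_seq T ts ! i..<full_seq T ts ! Suc i} a p)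
                = Estar N K kappa g delta2 pbar upsbar eps
                    (full_seq T ts ! i) (full_seq T ts ! Suc i))"
      then have ss: "samp_seq T taubar ts" by blast
      have "ereal (energy N K {1..T} a p) = (\<Sum>i\<in>{0..length ts}. ereal (?en ts i a p))"
        by (rule energy_split[OF ss])
      also have "\<dots> = (\<Sum>i\<in>{0..length ts}. ?E ts i)"
      proof (intro sum.cong refl)
        fix i assume "i \<in> {0..length ts}"
        then have "i \<le> length ts" by simp
        then show "ereal (?en ts i a p) = ?E ts i" using H by blast
      qed
      also have "\<dots> = obj_P31 N K T kappa g delta2 pbar upsbar eps ts" by (simp add: obj_P31_def)
      also have "\<dots> = opt_P3 N K T kappa g delta2 pbar upsbar taubar eps" using H eq by simp
      finally show "feasible_P3 N K T kappa g delta2 pbar upsbar taubar eps a p ts \<and>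
               ereal (energy N K {1..T} a p) = opt_P3 N K T kappa g delta2 pbar upsbar taubar eps"
        using glue_P3[OF assms(1,3) ss] H by blast
    qed
  qed
qed

end
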